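(* (1) Extended phase space integrators with symmetric projection (based on a composition method $\Psi_h$ as in the context) preserve arbitrary affine symmetries, quadratic first integrals, and constant symplectic structures when there are any: for every smooth $H$ and step $z_0\mapsto z_1$ of the integrator, (i) if $Q(z)=z^\top Cz$ is a first integral of $X_H$ then $Q(z_1)=Q(z_0)$; (ii) the step map is symplectic with respect to $dq\wedge dp$; (iii) if $a(z)=Az+b$ is an affine map of $\mathbb{R}^{2d}$ with $X_H(Az+b)=AX_H(z)$ for all $z$, then the step map commutes with $a$. (2) Monoimplicit symplectic Runge--Kutta methods of all orders exist: for every positive integer $p$ there is a Runge--Kutta method of classical order at least $p$ whose coefficient matrix $(a_{ij})$ is a rank-one matrix plus a matrix of spectral radius zero and whose coefficients satisfy $b_ib_j-b_ia_{ij}-b_ja_{ji}=0$ for all $i,j$.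
   Context: Let $H\colon\mathbb{R}^{2d}\to\mathbb{R}$ be smooth and $X_H$ the vector field $\dot q=D_2H(q,p)$, $\dot p=-D_1H(q,p)$. On $\mathbb{R}^{4d}\ni(q,x,p,y)$ let $\hat H_A(q,x,p,y)=H(x,p)$, $\hat H_B(q,x,p,y)=H(q,y)$, with flows $\exp(tX_{\hat H_A})(q,x,p,y)=(q+tD_2H(x,p),x,p,y-tD_1H(x,p))$ and $\exp(tX_{\hat H_B})(q,x,p,y)=(q,x+tD_2H(q,y),p-tD_1H(q,y),y)$. A composition method with real coefficients $a_1,\dots,a_s$ is $\Psi_h=\phi_s\circ\cdots\circ\phi_1$ with $\phi_i=\exp(a_ihX_{\hat H_A})$ for odd $i$ and $\phi_i=\exp(a_ihX_{\hat H_B})$ for even $i$. Let $D=\begin{bmatrix}I_d&-I_d&0&0\\0&0&I_d&-I_d\end{bmatrix}$ and $\mathcal{N}=\ker D=\{(q,q,p,p)\}$. The extended phase space integrator with symmetric projection maps $z_0=(q_0,p_0)$ to $z_1$: $\zeta_0=(q_0,q_0,p_0,p_0)$; find $\mu\in\mathbb{R}^{2d}$ with $\Psi_h(\zeta_0+D^\top\mu)+D^\top\mu\in\mathcal{N}$; set $(q_1,q_1,p_1,p_1):=\Psi_h(\zeta_0+D^\top\mu)+D^\top\mu$ and $z_1=(q_1,p_1)$. A Runge--Kutta method is $Z_i=z_0+h\sum_ja_{ij}f(Z_j)$, $z_1=z_0+h\sum_ib_if(Z_i)$. *)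

theory Defs
  imports "HOL-Analysis.Analysis"
begin

definition qpart :: "real^('d::finite+'d) \<Rightarrow> real^('d::finite)" where
  "qpart z = (\<chi> i. z $ Inl i)"

definition ppart :: "real^('d::finite+'d) \<Rightarrow> real^('d::finite)" where
  "ppart z = (\<chi> i. z $ Inr i)"

definition mkz :: "real^('d::finite) \<Rightarrow> real^('d::finite) \<Rightarrow> real^('d::finite+'d)" where
  "mkz q p = (\<chi> k. case k of Inl i \<Rightarrow> q $ i | Inr i \<Rightarrow> p $ i)"

text \<open>Smoothness (C-infinity): all iterated Frechet derivatives exist everywhere.
  Df y vs is the iterated derivative at y applied to the directions vs.\<close>
definition smooth_fun :: "('a::real_normed_vector \<Rightarrow> 'b::real_normed_vector) \<Rightarrow> bool" where
  "smooth_fun f \<longleftrightarrow> (\<exists>Df :: 'a \<Rightarrow> 'a list \<Rightarrow> 'b.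
      (\<forall>y. Df y [] = f y) \<and>
      (\<forall>y vs. ((\<lambda>x. Df x vs) has_derivative (\<lambda>v. Df y (v # vs))) (at y)))"

definition D1H :: "(real^('d::finite+'d) \<Rightarrow> real) \<Rightarrow> real^('d::finite+'d) \<Rightarrow> real^('d::finite)" where
  "D1H H z = (\<chi> i. frechet_derivative H (at z) (mkz (axis i 1) 0))"

definition D2H :: "(real^('d::finite+'d) \<Rightarrow> real) \<Rightarrow> real^('d::finite+'d) \<Rightarrow> real^('d::finite)" where
  "D2H H z = (\<chi> i. frechet_derivative H (at z) (mkz 0 (axis i 1)))"

definition XH :: "(real^('d::finite+'d) \<Rightarrow> real) \<Rightarrow> real^('d::finite+'d) \<Rightarrow> real^('d::finite+'d)" where
  "XH H z = mkz (D2H H z) (- D1H H z)"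

definition first_integral :: "(real^('d::finite+'d) \<Rightarrow> real) \<Rightarrow> (real^('d::finite+'d) \<Rightarrow> real) \<Rightarrow> bool" where
  "first_integral H Q \<longleftrightarrow> (\<forall>z. \<exists>Q'. (Q has_derivative Q') (at z) \<and> Q' (XH H z) = 0)"

definition omega :: "real^('d::finite+'d) \<Rightarrow> real^('d::finite+'d) \<Rightarrow> real" where
  "omega u v = qpart u \<bullet> ppart v - ppart u \<bullet> qpart v"

type_synonym 'd ext = "(real^'d) \<times> (real^'d) \<times> (real^'d) \<times> (real^'d)"

definition addE :: "('d::finite) ext \<Rightarrow> ('d::finite) ext \<Rightarrow> ('d::finite) ext" where
  "addE u v = (case u of (q,x,p,y) \<Rightarrow> case v of (q',x',p',y') \<Rightarrow> (q+q', x+x', p+p', y+y'))"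

definition flowA :: "(real^('d::finite+'d) \<Rightarrow> real) \<Rightarrow> real \<Rightarrow> ('d::finite) ext \<Rightarrow> ('d::finite) ext" where
  "flowA H t w = (case w of (q,x,p,y) \<Rightarrow>
     (q + t *\<^sub>R D2H H (mkz x p), x, p, y - t *\<^sub>R D1H H (mkz x p)))"

definition flowB :: "(real^('d::finite+'d) \<Rightarrow> real) \<Rightarrow> real \<Rightarrow> ('d::finite) ext \<Rightarrow> ('d::finite) ext" where
  "flowB H t w = (case w of (q,x,p,y) \<Rightarrow>
     (q, x + t *\<^sub>R D2H H (mkz q y), p - t *\<^sub>R D1H H (mkz q y), y))"

text \<open>Composition method Psi_h = phi_s o ... o phi_1 with coefficients as = [a_1,...,a_s];
  phi_i uses flow A for odd i and flow B for even i (1-based), i.e. even/odd 0-based index.\<close>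
definition psi :: "(real^('d::finite+'d) \<Rightarrow> real) \<Rightarrow> real list \<Rightarrow> real \<Rightarrow> ('d::finite) ext \<Rightarrow> ('d::finite) ext" where
  "psi H as h w = fold (\<lambda>(i,c) u. if even i then flowA H (c * h) u else flowB H (c * h) u)
                       (zip [0..<length as] as) w"

definition DT :: "real^('d::finite+'d) \<Rightarrow> ('d::finite) ext" where
  "DT \<mu> = (qpart \<mu>, - qpart \<mu>, ppart \<mu>, - ppart \<mu>)"

definition embed :: "real^('d::finite+'d) \<Rightarrow> ('d::finite) ext" where
  "embed z = (qpart z, qpart z, ppart z, ppart z)"

definition inN :: "('d::finite) ext \<Rightarrow> bool" where
  "inN w \<longleftrightarrow> (case w of (q,x,p,y) \<Rightarrow> q = x \<and> p = y)"

definition projE :: "('d::finite) ext \<Rightarrow> real^('d::finite+'d)" where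
  "projE w = (case w of (q,x,p,y) \<Rightarrow> mkz q p)"

definition step_res :: "(real^('d::finite+'d) \<Rightarrow> real) \<Rightarrow> real list \<Rightarrow> real \<Rightarrow> real^('d::finite+'d) \<Rightarrow> real^('d::finite+'d) \<Rightarrow> ('d::finite) ext" where
  "step_res H as h z \<mu> = addE (psi H as h (addE (embed z) (DT \<mu>))) (DT \<mu>)"

definition is_step :: "(real^('d::finite+'d) \<Rightarrow> real) \<Rightarrow> real list \<Rightarrow> real \<Rightarrow> real^('d::finite+'d) \<Rightarrow> real^('d::finite+'d) \<Rightarrow> bool" where
  "is_step H as h z0 z1 \<longleftrightarrow> (\<exists>\<mu>. step_res H as h z0 \<mu> = embed z1)"

datatype rtree = Node "rtree list"

fun tord :: "rtree \<Rightarrow> nat" where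
  "tord (Node ts) = 1 + sum_list (map tord ts)"

fun tgamma :: "rtree \<Rightarrow> nat" where
  "tgamma (Node ts) = tord (Node ts) * prod_list (map tgamma ts)"

fun ew :: "nat \<Rightarrow> (nat \<Rightarrow> nat \<Rightarrow> real) \<Rightarrow> rtree \<Rightarrow> nat \<Rightarrow> real" where
  "ew s A (Node ts) i = prod_list (map (\<lambda>t. \<Sum>j<s. A i j * ew s A t j) ts)"

text \<open>Classical order at least p (Butcher order conditions for all rooted trees with at most p vertices).\<close>
definition rk_order_ge :: "nat \<Rightarrow> (nat \<Rightarrow> nat \<Rightarrow> real) \<Rightarrow> (nat \<Rightarrow> real) \<Rightarrow> nat \<Rightarrow> bool" where
  "rk_order_ge s A b p \<longleftrightarrow>
     (\<forall>t. tord t \<le> p \<longrightarrow> (\<Sum>i<s. b i * ew s A t i) = 1 / real (tgamma t))"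

definition spectral_radius_zero :: "nat \<Rightarrow> (nat \<Rightarrow> nat \<Rightarrow> real) \<Rightarrow> bool" where
  "spectral_radius_zero s N \<longleftrightarrow>
     (\<forall>ev::complex. (\<exists>v::nat \<Rightarrow> complex. (\<exists>i<s. v i \<noteq> 0) \<and>
         (\<forall>i<s. (\<Sum>j<s. complex_of_real (N i j) * v j) = ev * v i)) \<longrightarrow> ev = 0)"

definition rank_one :: "nat \<Rightarrow> (nat \<Rightarrow> nat \<Rightarrow> real) \<Rightarrow> bool" where
  "rank_one s R \<longleftrightarrow> (\<exists>u v :: nat \<Rightarrow> real. (\<exists>i<s. u i \<noteq> 0) \<and> (\<exists>j<s. v j \<noteq> 0) \<and>
       (\<forall>i<s. \<forall>j<s. R i j = u i * v j))"

end

theory Submission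
  imports Defs "HOL-Computational_Algebra.Polynomial"
begin

definition integ :: "'a::field_char_0 poly \<Rightarrow> 'a poly" where
  "integ p = (\<Sum>k\<le>degree p. monom (coeff p k / of_nat (Suc k)) (Suc k))"

lemma coeff_integ: "coeff (integ p) n = (if n = 0 then 0 else coeff p (n - 1) / of_nat n)"
proof -
  have "coeff (integ p) n = (\<Sum>k\<le>degree p. if Suc k = n then coeff p k / of_nat (Suc k) else 0)"
    unfolding integ_def coeff_sum coeff_monom by (intro sum.cong) auto
  also have "\<dots> = (if n = 0 then 0 else coeff p (n - 1) / of_nat n)"
  proof (cases n)
    case 0 then show ?thesis by simp
  next
    case (Suc m)
    show ?thesis
    proof (cases "m \<le> degree p")
      case True
      then show ?thesis using Suc by (simp add: sum.delta)
    next
      case False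
      then show ?thesis using Suc by (simp add: coeff_eq_0)
    qed
  qed
  finally show ?thesis .
qed

lemma integ_add: "integ (p + q) = integ p + integ q"
  by (simp add: poly_eq_iff coeff_integ add_divide_distrib)

lemma integ_smult: "integ (smult a p) = smult a (integ p)"
  by (simp add: poly_eq_iff coeff_integ)

lemma integ_0[simp]: "integ 0 = 0"
  by (simp add: poly_eq_iff coeff_integ)

lemma integ_diff: "integ (p - q) = integ p - integ q"
  by (simp add: poly_eq_iff coeff_integ diff_divide_distrib)

lemma integ_sum: "integ (\<Sum>j\<in>S. f j) = (\<Sum>j\<in>S. integ (f j))"
  by (induction S rule: infinite_finite_induct) (auto simp: integ_add)

lemma poly_integ_0[simp]: "poly (integ p) 0 = 0"
  by (simp add: poly_0_coeff_0 coeff_integ)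

lemma pderiv_integ[simp]: "pderiv (integ p) = p"
  by (simp add: poly_eq_iff coeff_pderiv coeff_integ del: of_nat_Suc)

lemma integ_pderiv: "integ (pderiv r) = r - [:poly r 0:]"
proof -
  have "coeff (integ (pderiv r)) n = coeff (r - [:poly r 0:]) n" for n
    by (cases n) (auto simp: coeff_integ coeff_pderiv poly_0_coeff_0 coeff_pCons simp del: of_nat_Suc split: nat.split)
  then show ?thesis by (simp add: poly_eq_iff)
qed

lemma degree_integ_le: "degree (integ p) \<le> Suc (degree p)"
  by (rule degree_le) (auto simp: coeff_integ coeff_eq_0)

lemma integ_monom: "integ (monom a m) = monom (a / of_nat (Suc m)) (Suc m)"
  by (auto simp: poly_eq_iff coeff_integ coeff_monom)

definition J :: "'a::field_char_0 poly \<Rightarrow> 'a" where "J p = poly (integ p) 1"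

lemma J_add: "J (p + q) = J p + J q" by (simp add: J_def integ_add)
lemma J_smult: "J (smult a p) = a * J p" by (simp add: J_def integ_smult)
lemma J_sum: "J (\<Sum>j\<in>S. f j) = (\<Sum>j\<in>S. J (f j))" by (simp add: J_def integ_sum poly_sum)
lemma J_pderiv: "J (pderiv r) = poly r 1 - poly r 0" by (simp add: J_def integ_pderiv)
lemma J_parts: "J (pderiv p * q) = poly p 1 * poly q 1 - poly p 0 * poly q 0 - J (p * pderiv q)"
proof -
  have "J (pderiv (p * q)) = J (p * pderiv q) + J (pderiv p * q)"
    by (simp add: pderiv_mult J_add mult.commute)
  then show ?thesis by (simp add: J_pderiv)
qed

definition Fp :: "nat \<Rightarrow> real poly" where "Fp s = [:0,-1,1:] ^ s"
definition Dp :: "nat \<Rightarrow> nat \<Rightarrow> real poly" where "Dp s k = (pderiv ^^ k) (Fp s)"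

lemma Dp_Suc: "Dp s (Suc k) = pderiv (Dp s k)"
  by (simp add: Dp_def)

lemma dvd_pderiv_pow:
  fixes p :: "'a::{idom,semiring_char_0} poly"
  assumes "[:-a,1:] ^ Suc m dvd p" shows "[:-a,1:] ^ m dvd pderiv p"
proof -
  obtain r where r: "p = [:-a,1:] ^ Suc m * r" using assms by (auto simp: dvd_def)
  have "pderiv p = [:-a,1:] ^ Suc m * pderiv r + r * (smult (of_nat (Suc m)) ([:-a,1:] ^ m) * pderiv [:-a,1:])"
    unfolding r pderiv_mult pderiv_power_Suc by simp
  also have "\<dots> = [:-a,1:] ^ m * ([:-a,1:] * pderiv r + r * smult (of_nat (Suc m)) (pderiv [:-a,1:]))"
    by (simp add: algebra_simps)
  finally show ?thesis by simp
qed

lemma Fp_factor: "Fp s = [:-0,1:] ^ s * [:-1,1:] ^ s"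
proof -
  have e: "[:0,-1,1:] = [:-0,1:] * ([:-1,1:] :: real poly)" by simp
  show ?thesis unfolding Fp_def by (subst e) (rule power_mult_distrib)
qed

lemma Dp_dvd:
  assumes "k \<le> s" "a = 0 \<or> a = 1"
  shows "[:-a,1:] ^ (s - k) dvd Dp s k"
  using assms(1)
proof (induction k)
  case 0
  then show ?case using assms(2) unfolding Dp_def Fp_factor by auto
next
  case (Suc k)
  then have "[:-a,1:] ^ Suc (s - Suc k) dvd Dp s k"
    by (metis Suc_diff_Suc Suc_leD Suc_le_lessD)
  then show ?case unfolding Dp_Suc by (rule dvd_pderiv_pow)
qed

lemma Dp_vanish:
  assumes "k < s" "a = 0 \<or> a = 1"
  shows "poly (Dp s k) a = 0"
proof -
  have "[:-a,1:] ^ (s - k) dvd Dp s k" using Dp_dvd assms by simp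
  moreover have "[:-a,1:] dvd [:-a,1:] ^ (s - k)"
    using assms(1) by (metis dvd_power zero_less_diff)
  ultimately show ?thesis by (simp add: poly_eq_0_iff_dvd dvd_trans)
qed

lemma degree_Fp: "degree (Fp s) = 2 * s"
  unfolding Fp_def by (simp add: degree_power_eq)

lemma degree_Dp: "degree (Dp s k) = 2 * s - k"
  by (induction k) (auto simp: Dp_Suc degree_pderiv Dp_def degree_Fp)

lemma pderiv_pow_zero:
  fixes q :: "'a::{idom,ring_char_0} poly"
  shows "degree q < k \<Longrightarrow> (pderiv ^^ k) q = 0"
proof (induction k arbitrary: q)
  case 0 then show ?case by simp
next
  case (Suc k)
  have "(pderiv ^^ Suc k) q = (pderiv ^^ k) (pderiv q)" by (simp add: funpow_Suc_right del: funpow.simps)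
  moreover have "(pderiv ^^ k) (pderiv q) = 0"
  proof (cases "k = 0")
    case True
    then show ?thesis using Suc.prems by (simp add: pderiv_eq_0_iff)
  next
    case False
    then show ?thesis using Suc.prems by (intro Suc.IH) (simp add: degree_pderiv)
  qed
  ultimately show ?case by simp
qed

lemma ortho_gen:
  assumes "m \<le> s"
  shows "J (Dp s s * q) = (-1) ^ m * J (Dp s (s - m) * (pderiv ^^ m) q)"
  using assms
proof (induction m)
  case 0 then show ?case by simp
next
  case (Suc m)
  have e: "s - m = Suc (s - Suc m)" using Suc.prems by simp
  have "J (Dp s (s - m) * (pderiv ^^ m) q) = J (pderiv (Dp s (s - Suc m)) * (pderiv ^^ m) q)"
    by (simp add: e Dp_Suc)
  also have "\<dots> = - J (Dp s (s - Suc m) * (pderiv ^^ Suc m) q)"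
    using Suc.prems by (simp add: J_parts Dp_vanish)
  finally show ?case using Suc by simp
qed

lemma ortho:
  assumes "degree q < s"
  shows "J (Dp s s * q) = 0"
  using ortho_gen[of s s q] pderiv_pow_zero[OF assms] by (simp add: J_def)

lemma rolle_poly:
  fixes p :: "real poly"
  assumes "a < b" "poly p a = 0" "poly p b = 0"
  shows "\<exists>z. a < z \<and> z < b \<and> poly (pderiv p) z = 0"
proof -
  have "\<exists>z. a < z \<and> z < b \<and> (\<lambda>v. v * poly (pderiv p) z) = (\<lambda>v. 0)"
    apply (rule Rolle_deriv[OF assms(1), of "poly p"])
    using assms apply simp
     apply (intro continuous_intros)
    using poly_DERIV[of p] unfolding has_field_derivative_def by (simp add: mult.commute[of _ "poly (pderiv p) _"])
  then obtain z where "a < z" "z < b" "(\<lambda>v. v * poly (pderiv p) z) = (\<lambda>v. 0)" by blast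
  then show ?thesis by (metis mult_1)
qed

lemma roots_chain:
  assumes "k < s"
  shows "\<exists>r. r 0 = 0 \<and> r (Suc k) = 1 \<and> (\<forall>j\<le>Suc k. poly (Dp s k) (r j) = 0 \<and> 0 \<le> r j \<and> r j \<le> 1)
           \<and> (\<forall>j\<le>k. r j < r (Suc j))"
  using assms
proof (induction k)
  case 0
  show ?case
    by (rule exI[of _ "\<lambda>j. if j = 0 then 0 else 1"]) (use 0 Dp_vanish in \<open>auto simp: le_Suc_eq\<close>)
next
  case (Suc k)
  then obtain r where r: "r 0 = 0" "r (Suc k) = 1"
    "\<forall>j\<le>Suc k. poly (Dp s k) (r j) = 0 \<and> 0 \<le> r j \<and> r j \<le> 1" "\<forall>j\<le>k. r j < r (Suc j)" by auto
  have "\<forall>j. \<exists>z. j \<le> k \<longrightarrow> r j < z \<and> z < r (Suc j) \<and> poly (Dp s (Suc k)) z = 0"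
  proof
    fix j
    show "\<exists>z. j \<le> k \<longrightarrow> r j < z \<and> z < r (Suc j) \<and> poly (Dp s (Suc k)) z = 0"
    proof (cases "j \<le> k")
      case True
      then show ?thesis using rolle_poly[of "r j" "r (Suc j)" "Dp s k"] r by (auto simp: Dp_Suc)
    qed simp
  qed
  then obtain \<xi> where xi: "\<And>j. j \<le> k \<Longrightarrow> r j < \<xi> j \<and> \<xi> j < r (Suc j) \<and> poly (Dp s (Suc k)) (\<xi> j) = 0"
    by metis
  define r' where "r' j = (if j = 0 then 0 else if j = Suc (Suc k) then 1 else \<xi> (j - 1))" for j
  have v0: "poly (Dp s (Suc k)) 0 = 0" "poly (Dp s (Suc k)) 1 = 0" using Suc.prems Dp_vanish by auto
  show ?case
  proof (rule exI[of _ r'], intro conjI allI impI)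
    show "r' 0 = 0" "r' (Suc (Suc k)) = 1" by (auto simp: r'_def)
  next
    fix j assume j: "j \<le> Suc (Suc k)"
    show "poly (Dp s (Suc k)) (r' j) = 0" using xi[of "j - 1"] v0 j by (auto simp: r'_def)
    show "0 \<le> r' j"
    proof -
      { assume "j \<noteq> 0" "j \<noteq> Suc (Suc k)"
        then have "r (j - 1) < \<xi> (j - 1)" using xi[of "j - 1"] j by auto
        moreover have "0 \<le> r (j - 1)" using r(3) j by auto
        ultimately have "0 \<le> \<xi> (j - 1)" by simp }
      then show ?thesis by (auto simp: r'_def)
    qed
    show "r' j \<le> 1"
    proof -
      { assume "j \<noteq> 0" "j \<noteq> Suc (Suc k)"
        then have "\<xi> (j - 1) < r (Suc (j - 1))" using xi[of "j - 1"] j by auto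
        moreover have "r (Suc (j - 1)) \<le> 1" using r(3) j \<open>j \<noteq> 0\<close> \<open>j \<noteq> Suc (Suc k)\<close> by auto
        ultimately have "\<xi> (j - 1) \<le> 1" by simp }
      then show ?thesis by (auto simp: r'_def)
    qed
  next
    fix j assume j: "j \<le> Suc k"
    show "r' j < r' (Suc j)"
    proof (cases "j = 0")
      case True
      then show ?thesis using xi[of 0] r(1) by (auto simp: r'_def)
    next
      case False
      show ?thesis
      proof (cases "j = Suc k")
        case True
        then show ?thesis using xi[of k] r(2) by (auto simp: r'_def)
      next
        case False2: False
        have "\<xi> (j - 1) < r j" using xi[of "j - 1"] j False by auto
        also have "r j < \<xi> j" using xi[of j] j False2 by auto
        finally show ?thesis using False False2 j by (auto simp: r'_def)
      qed
    qed
  qed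
qed

lemma gauss_nodes:
  assumes "0 < s"
  shows "\<exists>c. (\<forall>j<s. poly (Dp s s) (c j) = 0 \<and> 0 < c j \<and> c j < 1) \<and> (\<forall>j. Suc j < s \<longrightarrow> c j < c (Suc j))"
proof -
  obtain r where r: "r 0 = 0" "r s = 1" "\<forall>j\<le>s. poly (Dp s (s - 1)) (r j) = 0 \<and> 0 \<le> r j \<and> r j \<le> 1"
    "\<forall>j<s. r j < r (Suc j)"
    using roots_chain[of "s - 1" s] assms by (auto simp: less_Suc_eq_le)
  have "\<forall>j. \<exists>z. j < s \<longrightarrow> r j < z \<and> z < r (Suc j) \<and> poly (Dp s s) z = 0"
  proof
    fix j
    show "\<exists>z. j < s \<longrightarrow> r j < z \<and> z < r (Suc j) \<and> poly (Dp s s) z = 0"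
    proof (cases "j < s")
      case True
      have "Dp s s = pderiv (Dp s (s - 1))" using assms Dp_Suc[of s "s - 1"] by simp
      then show ?thesis using rolle_poly[of "r j" "r (Suc j)" "Dp s (s - 1)"] r True by auto
    qed simp
  qed
  then obtain c where c: "\<And>j. j < s \<Longrightarrow> r j < c j \<and> c j < r (Suc j) \<and> poly (Dp s s) (c j) = 0"
    by metis
  show ?thesis
  proof (rule exI[of _ c], intro conjI allI impI)
    fix j assume j: "j < s"
    show "poly (Dp s s) (c j) = 0" using c j by auto
    have "0 \<le> r j" "r (Suc j) \<le> 1" using r(3) j by auto
    then show "0 < c j" "c j < 1" using c[OF j] by auto
  next
    fix j assume j: "Suc j < s"
    show "c j < c (Suc j)" using c[of j] c[of "Suc j"] j by force
  qed
qed

definition lagr :: "(nat \<Rightarrow> 'a::field) \<Rightarrow> nat \<Rightarrow> nat \<Rightarrow> 'a poly" where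
  "lagr c s j = (\<Prod>k\<in>{..<s}-{j}. smult (1 / (c j - c k)) [:-c k, 1:])"

lemma poly_lagr:
  assumes "inj_on c {..<s}" "i < s" "j < s"
  shows "poly (lagr c s j) (c i) = (if i = j then 1 else 0)"
proof (cases "i = j")
  case True
  have "poly (lagr c s j) (c i) = (\<Prod>k\<in>{..<s}-{j}. poly (smult (1 / (c j - c k)) [:-c k, 1:]) (c j))"
    unfolding lagr_def poly_prod using True by simp
  also have "\<dots> = 1"
  proof (rule prod.neutral, rule ballI)
    fix k assume "k \<in> {..<s}-{j}"
    then have "c j \<noteq> c k" using assms(1,3) by (auto dest: inj_onD)
    then have "c j - c k \<noteq> 0" by simp
    then show "poly (smult (1 / (c j - c k)) [:-c k, 1:]) (c j) = 1"
      by (simp add: diff_divide_distrib[symmetric])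
  qed
  finally show ?thesis using True by simp
next
  case False
  have "poly (lagr c s j) (c i) = (\<Prod>k\<in>{..<s}-{j}. (c i - c k) / (c j - c k))"
    unfolding lagr_def poly_prod by (intro prod.cong) (auto simp: diff_divide_distrib)
  also have "\<dots> = 0"
    by (rule prod_zero) (use False assms in auto)
  finally show ?thesis using False by simp
qed

lemma degree_lagr:
  assumes "j < s" shows "degree (lagr c s j) \<le> s - 1"
proof -
  have "degree (lagr c s j) \<le> sum (degree \<circ> (\<lambda>k. smult (1 / (c j - c k)) [:-c k, 1:])) ({..<s}-{j})"
    unfolding lagr_def by (rule degree_prod_sum_le) simp
  also have "\<dots> \<le> sum (\<lambda>k. 1) ({..<s}-{j})"
    by (intro sum_mono) (auto simp: degree_smult_le)
  also have "\<dots> = s - 1" using assms by simp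
  finally show ?thesis .
qed

lemma lagr_interp:
  fixes c :: "nat \<Rightarrow> 'a::field"
  assumes "inj_on c {..<s}" "degree q < s"
  shows "q = (\<Sum>j<s. smult (poly q (c j)) (lagr c s j))"
proof (rule poly_eqI_degree[where A = "c ` {..<s}"])
  fix x assume "x \<in> c ` {..<s}"
  then obtain i where i: "i < s" "x = c i" by auto
  have "poly (\<Sum>j<s. smult (poly q (c j)) (lagr c s j)) x = (\<Sum>j<s. if i = j then poly q (c j) else 0)"
    unfolding poly_sum poly_smult i(2) by (intro sum.cong) (auto simp: poly_lagr assms i)
  also have "\<dots> = poly q x" using i by simp
  finally show "poly q x = poly (\<Sum>j<s. smult (poly q (c j)) (lagr c s j)) x" by simp
next
  show "degree q < card (c ` {..<s})" using assms by (simp add: card_image)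
  have "degree (\<Sum>j<s. smult (poly q (c j)) (lagr c s j)) \<le> s - 1"
    by (intro degree_sum_le) (use degree_lagr[of _ s c] in \<open>auto intro: order.trans[OF degree_smult_le]\<close>)
  then show "degree (\<Sum>j<s. smult (poly q (c j)) (lagr c s j)) < card (c ` {..<s})"
    using assms by (simp add: card_image)
qed

lemma quadrature:
  fixes c :: "nat \<Rightarrow> real"
  assumes s: "0 < s" and inj: "inj_on c {..<s}" and roots: "\<forall>j<s. poly (Dp s s) (c j) = 0"
    and df: "degree f < 2 * s"
  shows "(\<Sum>j<s. J (lagr c s j) * poly f (c j)) = J f"
proof -
  define P where "P = Dp s s"
  have degP: "degree P = s" unfolding P_def degree_Dp by simp
  then have P0: "P \<noteq> 0" using s by auto
  define q where "q = f div P"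
  define r where "r = f mod P"
  have f: "f = q * P + r" unfolding q_def r_def by simp
  have dr: "degree r < s"
    using degree_mod_less[OF P0, of f] degP s unfolding r_def by auto
  have dq: "degree q < s"
  proof (cases "q = 0")
    case True then show ?thesis using s by simp
  next
    case False
    have "degree (q * P) = degree q + s" using False P0 degP by (simp add: degree_mult_eq)
    moreover have "q * P = f - r" using f by simp
    moreover have "degree (f - r) \<le> max (degree f) (degree r)" by (rule degree_diff_le_max)
    ultimately show ?thesis using df dr by auto
  qed
  have "J f = J (P * q) + J r" using f by (simp add: J_add mult.commute)
  also have "J (P * q) = 0" unfolding P_def by (rule ortho[OF dq])
  also have "J r = J (\<Sum>j<s. smult (poly r (c j)) (lagr c s j))"
    using lagr_interp[OF inj dr] by simp
  also have "\<dots> = (\<Sum>j<s. poly r (c j) * J (lagr c s j))"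
    by (simp add: J_sum J_smult)
  also have "\<dots> = (\<Sum>j<s. J (lagr c s j) * poly f (c j))"
  proof (intro sum.cong refl)
    fix j assume "j \<in> {..<s}"
    then have "poly P (c j) = 0" using roots unfolding P_def by auto
    then have "poly r (c j) = poly f (c j)" using f by simp
    then show "poly r (c j) * J (lagr c s j) = J (lagr c s j) * poly f (c j)" by simp
  qed
  finally show ?thesis by simp
qed

definition Am :: "(nat \<Rightarrow> real) \<Rightarrow> nat \<Rightarrow> nat \<Rightarrow> nat \<Rightarrow> real" where
  "Am c s i j = poly (integ (lagr c s j)) (c i)"
definition bm :: "(nat \<Rightarrow> real) \<Rightarrow> nat \<Rightarrow> nat \<Rightarrow> real" where
  "bm c s j = J (lagr c s j)"

lemma cond_C:
  fixes c :: "nat \<Rightarrow> real"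
  assumes inj: "inj_on c {..<s}" and m: "m < s"
  shows "(\<Sum>j<s. Am c s i j * c j ^ m) = c i ^ Suc m / of_nat (Suc m)"
proof -
  have "monom 1 m = (\<Sum>j<s. smult (poly (monom 1 m) (c j)) (lagr c s j))"
    using lagr_interp[OF inj, of "monom 1 m"] m by (simp add: degree_monom_eq)
  then have "poly (integ (monom 1 m)) (c i) = poly (integ (\<Sum>j<s. smult (c j ^ m) (lagr c s j))) (c i)"
    by (simp add: poly_monom)
  also have "\<dots> = (\<Sum>j<s. Am c s i j * c j ^ m)"
    by (simp add: integ_sum integ_smult poly_sum Am_def mult.commute)
  finally show ?thesis by (simp add: integ_monom poly_monom)
qed

lemma cond_B:
  fixes c :: "nat \<Rightarrow> real"
  assumes s: "0 < s" and inj: "inj_on c {..<s}" and roots: "\<forall>j<s. poly (Dp s s) (c j) = 0"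
    and m: "m < 2 * s"
  shows "(\<Sum>j<s. bm c s j * c j ^ m) = 1 / of_nat (Suc m)"
proof -
  have "(\<Sum>j<s. bm c s j * c j ^ m) = J (monom 1 m)"
    using quadrature[OF s inj roots, of "monom 1 m"] m by (simp add: degree_monom_eq bm_def poly_monom)
  also have "\<dots> = 1 / of_nat (Suc m)" by (simp add: J_def integ_monom poly_monom)
  finally show ?thesis .
qed

lemma cond_sympl:
  fixes c :: "nat \<Rightarrow> real"
  assumes s: "0 < s" and inj: "inj_on c {..<s}" and roots: "\<forall>j<s. poly (Dp s s) (c j) = 0"
    and i: "i < s" and j: "j < s"
  shows "bm c s i * bm c s j - bm c s i * Am c s i j - bm c s j * Am c s j i = 0"
proof -
  have key: "J (lagr c s a * integ (lagr c s b)) = bm c s a * Am c s a b" if a: "a < s" and b: "b < s" for a b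
  proof -
    have "degree (lagr c s a * integ (lagr c s b)) \<le> (s - 1) + Suc (s - 1)"
      using degree_mult_le[of "lagr c s a" "integ (lagr c s b)"] degree_lagr[OF a, of c]
        degree_integ_le[of "lagr c s b"] degree_lagr[OF b, of c] by linarith
    then have d: "degree (lagr c s a * integ (lagr c s b)) < 2 * s" using s by linarith
    have "J (lagr c s a * integ (lagr c s b)) = (\<Sum>k<s. J (lagr c s k) * poly (lagr c s a * integ (lagr c s b)) (c k))"
      using quadrature[OF s inj roots d] by simp
    also have "\<dots> = (\<Sum>k<s. if k = a then J (lagr c s k) * poly (integ (lagr c s b)) (c k) else 0)"
      by (intro sum.cong refl) (auto simp: poly_lagr[OF inj] a)
    also have "\<dots> = bm c s a * Am c s a b" using a by (simp add: bm_def Am_def)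
    finally show ?thesis .
  qed
  have "J (pderiv (integ (lagr c s i) * integ (lagr c s j)))
      = J (lagr c s j * integ (lagr c s i)) + J (lagr c s i * integ (lagr c s j))"
    by (simp add: pderiv_mult J_add mult.commute)
  moreover have "J (pderiv (integ (lagr c s i) * integ (lagr c s j))) = bm c s i * bm c s j"
    unfolding J_pderiv by (simp add: bm_def J_def)
  ultimately show ?thesis using key[OF i j] key[OF j i] by simp
qed

lemma prod_list_pos_nat: "(\<forall>x\<in>set xs. 0 < x) \<Longrightarrow> 0 < prod_list (xs :: nat list)"
  by (induction xs) auto

lemma tgamma_pos: "0 < tgamma t"
proof (induction t)
  case (Node ts)
  have "0 < prod_list (map tgamma ts)" by (rule prod_list_pos_nat) (use Node in auto)
  then show ?case by simp
qed

lemma prod_list_quot: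
  "prod_list (map (\<lambda>u. (x::real) ^ f u / real (g u)) ts) = x ^ sum_list (map f ts) / real (prod_list (map g ts))"
  by (induction ts) (auto simp: power_add)

lemma quot_helper: "0 < (g::nat) \<Longrightarrow> (x::real) / real g = x * real (1 + n) / real ((1 + n) * g)"
proof -
  assume "0 < g"
  have "real (1 + n) \<noteq> 0" by simp
  then have "x * real (1 + n) / (real (1 + n) * real g) = x / real g"
    by (metis mult.commute nonzero_mult_divide_mult_cancel_left)
  then show ?thesis by (simp only: of_nat_mult)
qed

lemma ew_formula:
  fixes A :: "nat \<Rightarrow> nat \<Rightarrow> real"
  assumes C: "\<And>m i. m < s \<Longrightarrow> i < s \<Longrightarrow> (\<Sum>j<s. A i j * c j ^ m) = c i ^ Suc m / of_nat (Suc m)"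
  shows "tord t \<le> Suc s \<Longrightarrow> i < s \<Longrightarrow> ew s A t i = c i ^ (tord t - 1) * real (tord t) / real (tgamma t)"
proof (induction t arbitrary: i)
  case (Node ts)
  have "ew s A (Node ts) i = prod_list (map (\<lambda>u. (\<Sum>j<s. A i j * ew s A u j)) ts)" by simp
  also have "\<dots> = prod_list (map (\<lambda>u. c i ^ tord u / real (tgamma u)) ts)"
  proof (rule arg_cong[where f = prod_list], rule map_cong[OF refl])
    fix u assume u: "u \<in> set ts"
    have "tord u \<le> sum_list (map tord ts)" using u by (simp add: member_le_sum_list)
    then have tu: "tord u \<le> s" using Node.prems by simp
    have pos: "0 < tord u" by (cases u) simp
    have "(\<Sum>j<s. A i j * ew s A u j) = (\<Sum>j<s. A i j * (c j ^ (tord u - 1) * real (tord u) / real (tgamma u)))"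
      by (intro sum.cong refl) (use Node.IH[OF u] tu in auto)
    also have "\<dots> = (\<Sum>j<s. A i j * c j ^ (tord u - 1)) * (real (tord u) / real (tgamma u))"
      unfolding sum_distrib_right by (intro sum.cong refl) simp
    also have "\<dots> = c i ^ Suc (tord u - 1) / of_nat (Suc (tord u - 1)) * (real (tord u) / real (tgamma u))"
      using C[of "tord u - 1" i] tu pos Node.prems by simp
    also have "\<dots> = c i ^ tord u / real (tgamma u)" using pos by simp
    finally show "(\<Sum>j<s. A i j * ew s A u j) = c i ^ tord u / real (tgamma u)" .
  qed
  also have "\<dots> = c i ^ sum_list (map tord ts) / real (prod_list (map tgamma ts))"
    by (rule prod_list_quot)
  also have "\<dots> = c i ^ (tord (Node ts) - 1) * real (tord (Node ts)) / real (tgamma (Node ts))"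
  proof -
    have g: "0 < prod_list (map tgamma ts)"
      using tgamma_pos[of "Node ts"] by (metis tgamma.simps nat_0_less_mult_iff)
    show ?thesis using quot_helper[OF g, of "c i ^ sum_list (map tord ts)" "sum_list (map tord ts)"]
      by simp
  qed
  finally show ?case .
qed

lemma order_from_BC:
  fixes A :: "nat \<Rightarrow> nat \<Rightarrow> real"
  assumes C: "\<And>m i. m < s \<Longrightarrow> i < s \<Longrightarrow> (\<Sum>j<s. A i j * c j ^ m) = c i ^ Suc m / of_nat (Suc m)"
    and B: "\<And>m. m < s \<Longrightarrow> (\<Sum>i<s. b i * c i ^ m) = 1 / of_nat (Suc m)"
  shows "rk_order_ge s A b s"
  unfolding rk_order_ge_def
proof (intro allI impI)
  fix t assume t: "tord t \<le> s"
  have pos: "0 < tord t" by (cases t) simp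
  have "(\<Sum>i<s. b i * ew s A t i) = (\<Sum>i<s. b i * c i ^ (tord t - 1)) * (real (tord t) / real (tgamma t))"
    unfolding sum_distrib_right
    by (intro sum.cong refl) (use ew_formula[OF C, of t] t in auto)
  also have "\<dots> = 1 / of_nat (Suc (tord t - 1)) * (real (tord t) / real (tgamma t))"
    using B[of "tord t - 1"] t pos by simp
  also have "\<dots> = 1 / real (tgamma t)" using pos by simp
  finally show "(\<Sum>i<s. b i * ew s A t i) = 1 / real (tgamma t)" .
qed

definition Mop :: "nat \<Rightarrow> 'a::field_char_0 poly \<Rightarrow> 'a poly" where
  "Mop s q = integ q - monom (coeff (integ q) s) s"

lemma coeff_Mop: "coeff (Mop s q) n = (if n = s then 0 else coeff (integ q) n)"
  by (simp add: Mop_def coeff_monom)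

lemma Mop_add: "Mop s (p + q) = Mop s p + Mop s q"
  by (simp add: poly_eq_iff coeff_Mop integ_add)
lemma Mop_smult: "Mop s (smult a p) = smult a (Mop s p)"
  by (simp add: poly_eq_iff coeff_Mop integ_smult)
lemma Mop_0: "Mop s 0 = 0"
  by (simp add: poly_eq_iff coeff_Mop)
lemma Mop_sum: "Mop s (\<Sum>j\<in>S. f j) = (\<Sum>j\<in>S. Mop s (f j))"
  by (induction S rule: infinite_finite_induct) (auto simp: Mop_add Mop_0)

lemma poly_map_of_real: "poly (map_poly of_real p) (of_real x) = (of_real (poly p x) :: 'a::{real_algebra_1,comm_semiring_0})"
  by (induction p) (auto simp: map_poly_pCons)

lemma Mop_map_of_real:
  "Mop s (map_poly complex_of_real p) = map_poly complex_of_real (Mop s p)"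
  by (simp add: poly_eq_iff coeff_Mop coeff_integ coeff_map_poly)

lemma degree_Mop:
  assumes "0 < s" "degree q < s" shows "degree (Mop s q) < s"
proof -
  have "degree (Mop s q) \<le> s - 1"
  proof (rule degree_le, intro allI impI)
    fix n assume "s - 1 < n"
    then have "n = s \<or> s < n" using assms by auto
    then show "coeff (Mop s q) n = 0"
      using assms by (auto simp: coeff_Mop coeff_integ coeff_eq_0)
  qed
  then show ?thesis using assms by simp
qed

definition vv :: "(nat \<Rightarrow> real) \<Rightarrow> nat \<Rightarrow> nat \<Rightarrow> real" where
  "vv c s j = coeff (integ (lagr c s j)) s"

lemma N_eq: "Am c s i j - c i ^ s * vv c s j = poly (Mop s (lagr c s j)) (c i)"
  by (simp add: Am_def vv_def Mop_def poly_monom)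

lemma vv_nonzero:
  fixes c :: "nat \<Rightarrow> real"
  assumes s: "0 < s" and inj: "inj_on c {..<s}"
  shows "\<exists>j<s. vv c s j \<noteq> 0"
proof (rule ccontr)
  assume "\<not> ?thesis"
  then have z: "\<And>j. j < s \<Longrightarrow> vv c s j = 0" by auto
  have "monom 1 (s - 1) = (\<Sum>j<s. smult (poly (monom 1 (s - 1)) (c j)) (lagr c s j))"
    using lagr_interp[OF inj, of "monom 1 (s - 1)"] s by (simp add: degree_monom_eq)
  then have "coeff (integ (monom 1 (s - 1))) s = coeff (integ (\<Sum>j<s. smult (c j ^ (s - 1)) (lagr c s j))) s"
    by (simp add: poly_monom)
  also have "\<dots> = (\<Sum>j<s. c j ^ (s - 1) * vv c s j)"
    by (simp add: integ_sum integ_smult coeff_sum vv_def)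
  also have "\<dots> = 0" using z by simp
  finally show False using s by (simp add: integ_monom coeff_monom)
qed

lemma nilpotent_part:
  fixes c :: "nat \<Rightarrow> real"
  assumes s: "0 < s" and inj: "inj_on c {..<s}"
  shows "spectral_radius_zero s (\<lambda>i j. Am c s i j - c i ^ s * vv c s j)"
  unfolding spectral_radius_zero_def
proof (intro allI impI)
  fix ev :: complex
  assume "\<exists>v. (\<exists>i<s. v i \<noteq> 0) \<and> (\<forall>i<s. (\<Sum>j<s. complex_of_real (Am c s i j - c i ^ s * vv c s j) * v j) = ev * v i)"
  then obtain v i0 where i0: "i0 < s" "v i0 \<noteq> 0"
    and ev: "\<And>i. i < s \<Longrightarrow> (\<Sum>j<s. complex_of_real (Am c s i j - c i ^ s * vv c s j) * v j) = ev * v i"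
    by blast
  define L where "L j = map_poly complex_of_real (lagr c s j)" for j
  define Q where "Q = (\<Sum>j<s. smult (v j) (L j))"
  have injC: "inj_on (\<lambda>j. complex_of_real (c j)) {..<s}"
    using inj by (auto simp: inj_on_def)
  have polyL: "poly (L j) (complex_of_real (c i)) = (if i = j then 1 else 0)" if "i < s" "j < s" for i j
    unfolding L_def poly_map_of_real using poly_lagr[OF inj that] by simp
  have polyQ: "poly Q (complex_of_real (c i)) = v i" if "i < s" for i
  proof -
    have "poly Q (complex_of_real (c i)) = (\<Sum>j<s. if i = j then v j else 0)"
      unfolding Q_def poly_sum poly_smult by (intro sum.cong refl) (use polyL that in auto)
    then show ?thesis using that by simp
  qed
  have degL: "degree (L j) \<le> s - 1" if "j < s" for j
    unfolding L_def using degree_lagr[OF that, of c] by (subst degree_map_poly) auto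
  have degQ: "degree Q < s"
  proof -
    have "degree Q \<le> s - 1" unfolding Q_def
      by (intro degree_sum_le) (use degL in \<open>auto intro: order.trans[OF degree_smult_le]\<close>)
    then show ?thesis using s by linarith
  qed
  have polyMQ: "poly (Mop s Q) (complex_of_real (c i)) = ev * v i" if "i < s" for i
  proof -
    have "poly (Mop s Q) (complex_of_real (c i)) = (\<Sum>j<s. v j * poly (Mop s (L j)) (complex_of_real (c i)))"
      unfolding Q_def Mop_sum Mop_smult poly_sum poly_smult ..
    also have "\<dots> = (\<Sum>j<s. complex_of_real (Am c s i j - c i ^ s * vv c s j) * v j)"
      unfolding N_eq L_def Mop_map_of_real poly_map_of_real by (simp add: mult.commute)
    also have "\<dots> = ev * v i" using ev[OF that] .
    finally show ?thesis .
  qed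
  have MQ: "Mop s Q = smult ev Q"
  proof (rule poly_eqI_degree[where A = "(\<lambda>j. complex_of_real (c j)) ` {..<s}"])
    fix x assume "x \<in> (\<lambda>j. complex_of_real (c j)) ` {..<s}"
    then obtain i where "i < s" "x = complex_of_real (c i)" by auto
    then show "poly (Mop s Q) x = poly (smult ev Q) x" using polyMQ polyQ by simp
  next
    show "degree (Mop s Q) < card ((\<lambda>j. complex_of_real (c j)) ` {..<s})"
      using degree_Mop[OF s degQ] injC by (simp add: card_image)
    show "degree (smult ev Q) < card ((\<lambda>j. complex_of_real (c j)) ` {..<s})"
      using degQ injC degree_smult_le[of ev Q] by (simp add: card_image)
  qed
  show "ev = 0"
  proof (rule ccontr)
    assume ne: "ev \<noteq> 0"
    have "coeff Q n = 0" for n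
    proof (induction n rule: less_induct)
      case (less n)
      have "ev * coeff Q n = coeff (Mop s Q) n" using MQ by simp
      also have "\<dots> = 0"
      proof (cases "n = 0 \<or> n = s")
        case True then show ?thesis by (auto simp: coeff_Mop coeff_integ)
      next
        case False
        then have "coeff Q (n - 1) = 0" using less by simp
        then show ?thesis using False by (simp add: coeff_Mop coeff_integ)
      qed
      finally show ?case using ne by simp
    qed
    then have "Q = 0" by (simp add: poly_eq_iff)
    then show False using polyQ[OF i0(1)] i0(2) by simp
  qed
qed

lemma part2:
  assumes "1 \<le> p"
  shows "\<exists>(s::nat) (A :: nat \<Rightarrow> nat \<Rightarrow> real) (b :: nat \<Rightarrow> real).
          rk_order_ge s A b p \<and>
          (\<exists>R N. rank_one s R \<and> spectral_radius_zero s N \<and>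
                 (\<forall>i<s. \<forall>j<s. A i j = R i j + N i j)) \<and>
          (\<forall>i<s. \<forall>j<s. b i * b j - b i * A i j - b j * A j i = 0)"
proof -
  define s where "s = p"
  have s: "0 < s" using assms s_def by simp
  obtain c where c: "\<forall>j<s. poly (Dp s s) (c j) = 0 \<and> 0 < c j \<and> c j < 1"
    and mono: "\<forall>j. Suc j < s \<longrightarrow> c j < c (Suc j)"
    using gauss_nodes[OF s] by blast
  have lt: "c i < c j" if "i < j" "j < s" for i j
    using that
  proof (induction j)
    case 0 then show ?case by simp
  next
    case (Suc j)
    then show ?case using mono by (cases "i = j") (auto intro: less_trans)
  qed
  have inj: "inj_on c {..<s}"
    unfolding inj_on_def by (metis lessThan_iff lt linorder_neqE_nat order_less_irrefl)
  have roots: "\<forall>j<s. poly (Dp s s) (c j) = 0" using c by auto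
  show ?thesis
  proof (intro exI conjI)
    show "rk_order_ge s (Am c s) (bm c s) p"
      unfolding s_def[symmetric]
      apply (rule order_from_BC[where c = c])
       apply (rule cond_C[OF inj], assumption)
      apply (rule cond_B[OF s inj roots])
      apply simp
      done
    show "rank_one s (\<lambda>i j. c i ^ s * vv c s j)"
    proof -
      obtain j where j: "j < s" "vv c s j \<noteq> 0" using vv_nonzero[OF s inj] by blast
      have "c 0 ^ s \<noteq> 0" using c s by auto
      then show ?thesis unfolding rank_one_def
        apply (rule_tac exI[of _ "\<lambda>i. c i ^ s"])
        apply (rule_tac exI[of _ "vv c s"])
        apply (intro conjI)
        using s \<open>c 0 ^ s \<noteq> 0\<close> apply blast
        using j apply blast
        by simp
    qed
    show "spectral_radius_zero s (\<lambda>i j. Am c s i j - c i ^ s * vv c s j)"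
      by (rule nilpotent_part[OF s inj])
    show "\<forall>i<s. \<forall>j<s. Am c s i j = c i ^ s * vv c s j + (Am c s i j - c i ^ s * vv c s j)" by simp
    show "\<forall>i<s. \<forall>j<s. bm c s i * bm c s j - bm c s i * Am c s i j - bm c s j * Am c s j i = 0"
      using cond_sympl[OF s inj roots] by blast
  qed
qed

lemma line_deriv:
  fixes F :: "'a::real_normed_vector \<Rightarrow> real"
  assumes "\<And>y. (F has_derivative F' y) (at y)"
  shows "((\<lambda>s. F (a + s *\<^sub>R u)) has_real_derivative F' (a + s *\<^sub>R u) u) (at s)"
proof -
  have l: "((\<lambda>s. a + s *\<^sub>R u) has_derivative (\<lambda>s'. s' *\<^sub>R u)) (at s)"
    by (auto intro!: derivative_eq_intros)
  have c: "((\<lambda>s. F (a + s *\<^sub>R u)) has_derivative (\<lambda>s'. F' (a + s *\<^sub>R u) (s' *\<^sub>R u))) (at s)"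
    by (rule has_derivative_compose[OF l assms])
  have lin: "linear (F' (a + s *\<^sub>R u))" using has_derivative_linear[OF assms] .
  have "(\<lambda>s'. F' (a + s *\<^sub>R u) (s' *\<^sub>R u)) = (*) (F' (a + s *\<^sub>R u) u)"
    by (rule ext) (simp add: linear_cmul[OF lin] mult.commute)
  then show ?thesis using c by (simp add: has_field_derivative_def)
qed

lemma mixed:
  fixes H :: "'a::real_normed_vector \<Rightarrow> real"
  assumes d1: "\<And>y. (H has_derivative DA y) (at y)"
    and d2: "\<And>y u. ((\<lambda>x. DA x u) has_derivative (\<lambda>w. DB y w u)) (at y)"
    and h: "0 < h"
  shows "\<exists>p. norm (p - z) \<le> h * (norm u + norm v) \<and>
     H (z + h *\<^sub>R u + h *\<^sub>R v) - H (z + h *\<^sub>R u) - H (z + h *\<^sub>R v) + H z = h * h * DB p v u"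
proof -
  define \<alpha> where "\<alpha> s = H ((z + h *\<^sub>R v) + s *\<^sub>R u) - H (z + s *\<^sub>R u)" for s
  have da: "(\<alpha> has_real_derivative (DA ((z + h *\<^sub>R v) + s *\<^sub>R u) u - DA (z + s *\<^sub>R u) u)) (at s)" for s
    unfolding \<alpha>_def by (intro DERIV_diff line_deriv d1)
  obtain \<xi> where xi: "0 < \<xi>" "\<xi> < h"
    "\<alpha> h - \<alpha> 0 = (h - 0) * (DA ((z + h *\<^sub>R v) + \<xi> *\<^sub>R u) u - DA (z + \<xi> *\<^sub>R u) u)"
    using MVT2[OF h, of \<alpha> "\<lambda>s. DA ((z + h *\<^sub>R v) + s *\<^sub>R u) u - DA (z + s *\<^sub>R u) u"] da by blast
  define \<beta> where "\<beta> t = DA ((z + \<xi> *\<^sub>R u) + t *\<^sub>R v) u" for t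
  have db: "(\<beta> has_real_derivative DB ((z + \<xi> *\<^sub>R u) + t *\<^sub>R v) v u) (at t)" for t
    unfolding \<beta>_def by (rule line_deriv[OF d2])
  obtain \<eta> where eta: "0 < \<eta>" "\<eta> < h"
    "\<beta> h - \<beta> 0 = (h - 0) * DB ((z + \<xi> *\<^sub>R u) + \<eta> *\<^sub>R v) v u"
    using MVT2[OF h, of \<beta> "\<lambda>t. DB ((z + \<xi> *\<^sub>R u) + t *\<^sub>R v) v u"] db by blast
  define p where "p = (z + \<xi> *\<^sub>R u) + \<eta> *\<^sub>R v"
  have "\<beta> h - \<beta> 0 = DA ((z + h *\<^sub>R v) + \<xi> *\<^sub>R u) u - DA (z + \<xi> *\<^sub>R u) u"
    by (simp add: \<beta>_def algebra_simps)
  then have "\<alpha> h - \<alpha> 0 = h * h * DB p v u" using xi(3) eta(3) by (simp add: p_def)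
  moreover have "\<alpha> h - \<alpha> 0 = H (z + h *\<^sub>R u + h *\<^sub>R v) - H (z + h *\<^sub>R u) - H (z + h *\<^sub>R v) + H z"
    by (simp add: \<alpha>_def algebra_simps)
  moreover have "norm (p - z) \<le> h * (norm u + norm v)"
  proof -
    have "norm (p - z) = norm (\<xi> *\<^sub>R u + \<eta> *\<^sub>R v)" by (simp add: p_def algebra_simps)
    also have "\<dots> \<le> \<xi> * norm u + \<eta> * norm v"
      using norm_triangle_ineq[of "\<xi> *\<^sub>R u" "\<eta> *\<^sub>R v"] xi eta by simp
    also have "\<dots> \<le> h * norm u + h * norm v"
      using xi eta by (intro add_mono mult_right_mono) auto
    finally show ?thesis by (simp add: algebra_simps)
  qed
  ultimately show ?thesis by metis
qed

lemma schwarz: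
  fixes H :: "'a::real_normed_vector \<Rightarrow> real"
  assumes d1: "\<And>y. (H has_derivative DA y) (at y)"
    and d2: "\<And>y u. ((\<lambda>x. DA x u) has_derivative (\<lambda>w. DB y w u)) (at y)"
    and c2: "\<And>u v. continuous (at z) (\<lambda>x. DB x u v)"
  shows "DB z u v = DB z v u"
proof (rule ccontr)
  assume ne: "DB z u v \<noteq> DB z v u"
  define e where "e = \<bar>DB z v u - DB z u v\<bar> / 2"
  have e: "0 < e" using ne by (simp add: e_def)
  obtain d1' where d1': "0 < d1'" "\<And>x. dist x z < d1' \<Longrightarrow> dist (DB x v u) (DB z v u) < e"
    using c2[of v u] e unfolding continuous_at_eps_delta by blast
  obtain d2' where d2': "0 < d2'" "\<And>x. dist x z < d2' \<Longrightarrow> dist (DB x u v) (DB z u v) < e"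
    using c2[of u v] e unfolding continuous_at_eps_delta by blast
  define K where "K = norm u + norm v + 1"
  have K: "0 < K" by (simp add: K_def add_nonneg_pos)
  define h where "h = min d1' d2' / (2 * K)"
  have h: "0 < h" using d1' d2' K by (simp add: h_def)
  have hK: "h * (norm u + norm v) < min d1' d2'"
  proof -
    have "h * (norm u + norm v) < h * K" using h by (simp add: K_def)
    also have "h * K = min d1' d2' / 2" using K by (simp add: h_def)
    also have "\<dots> < min d1' d2'" using d1'(1) d2'(1) by (simp add: min_def)
    finally show ?thesis .
  qed
  obtain p where p: "norm (p - z) \<le> h * (norm u + norm v)"
    "H (z + h *\<^sub>R u + h *\<^sub>R v) - H (z + h *\<^sub>R u) - H (z + h *\<^sub>R v) + H z = h * h * DB p v u"
    using mixed[OF d1 d2 h, of z u v] by blast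
  obtain p' where p': "norm (p' - z) \<le> h * (norm v + norm u)"
    "H (z + h *\<^sub>R v + h *\<^sub>R u) - H (z + h *\<^sub>R v) - H (z + h *\<^sub>R u) + H z = h * h * DB p' u v"
    using mixed[OF d1 d2 h, of z v u] by blast
  have "h * h * DB p v u = h * h * DB p' u v" using p(2) p'(2) by (simp add: algebra_simps)
  then have eq: "DB p v u = DB p' u v" using h by simp
  have "dist p z < d1'" using p(1) hK by (simp add: dist_norm)
  then have a: "\<bar>DB p v u - DB z v u\<bar> < e" using d1'(2) by (simp add: dist_real_def)
  have "dist p' z < d2'" using p'(1) hK by (simp add: dist_norm add.commute)
  then have b: "\<bar>DB p' u v - DB z u v\<bar> < e" using d2'(2) by (simp add: dist_real_def)
  have "\<bar>DB z v u - DB z u v\<bar> < 2 * e" using a b eq by linarith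
  then show False by (simp add: e_def)
qed

lemma qpart_mkz[simp]: "qpart (mkz q p) = q" by (simp add: qpart_def mkz_def vec_eq_iff)
lemma ppart_mkz[simp]: "ppart (mkz q p) = p" by (simp add: ppart_def mkz_def vec_eq_iff)

lemma z_eq_iff: "z = z' \<longleftrightarrow> qpart z = qpart z' \<and> ppart z = ppart z'"
proof
  assume "qpart z = qpart z' \<and> ppart z = ppart z'"
  then have "z $ k = z' $ k" for k
    by (cases k) (auto simp: qpart_def ppart_def vec_eq_iff)
  then show "z = z'" by (simp add: vec_eq_iff)
qed simp

lemma qpart_add[simp]: "qpart (a + b) = qpart a + qpart b" by (simp add: qpart_def vec_eq_iff)
lemma ppart_add[simp]: "ppart (a + b) = ppart a + ppart b" by (simp add: ppart_def vec_eq_iff)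
lemma qpart_diff[simp]: "qpart (a - b) = qpart a - qpart b" by (simp add: qpart_def vec_eq_iff)
lemma ppart_diff[simp]: "ppart (a - b) = ppart a - ppart b" by (simp add: ppart_def vec_eq_iff)
lemma qpart_minus[simp]: "qpart (- a) = - qpart a" by (simp add: qpart_def vec_eq_iff)
lemma ppart_minus[simp]: "ppart (- a) = - ppart a" by (simp add: ppart_def vec_eq_iff)
lemma qpart_scaleR[simp]: "qpart (r *\<^sub>R a) = r *\<^sub>R qpart a" by (simp add: qpart_def vec_eq_iff)
lemma ppart_scaleR[simp]: "ppart (r *\<^sub>R a) = r *\<^sub>R ppart a" by (simp add: ppart_def vec_eq_iff)
lemma qpart_zero[simp]: "qpart 0 = 0" by (simp add: qpart_def vec_eq_iff)
lemma ppart_zero[simp]: "ppart 0 = 0" by (simp add: ppart_def vec_eq_iff)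

lemma inner_qp: "u \<bullet> v = qpart u \<bullet> qpart v + ppart u \<bullet> ppart v"
proof -
  have "u \<bullet> v = (\<Sum>k\<in>UNIV. u $ k * v $ k)" by (simp add: inner_vec_def)
  also have "\<dots> = (\<Sum>k\<in>Inl ` UNIV \<union> Inr ` UNIV. u $ k * v $ k)"
    by (rule sum.cong) (auto simp: UNIV_sum)
  also have "\<dots> = (\<Sum>k\<in>Inl ` UNIV. u $ k * v $ k) + (\<Sum>k\<in>Inr ` UNIV. u $ k * v $ k)"
    by (rule sum.union_disjoint) auto
  also have "\<dots> = qpart u \<bullet> qpart v + ppart u \<bullet> ppart v"
    by (simp add: sum.reindex inner_vec_def qpart_def ppart_def)
  finally show ?thesis .
qed

definition zA :: "('d::finite) ext \<Rightarrow> real^('d+'d)" where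
  "zA w = mkz (fst (snd w)) (fst (snd (snd w)))"
definition zB :: "('d::finite) ext \<Rightarrow> real^('d+'d)" where
  "zB w = mkz (fst w) (snd (snd (snd w)))"
definition mk :: "real^('d::finite+'d) \<Rightarrow> real^('d+'d) \<Rightarrow> 'd ext" where
  "mk a b = (qpart b, qpart a, ppart a, ppart b)"

lemma zA_mk[simp]: "zA (mk a b) = a" by (simp add: zA_def mk_def z_eq_iff)
lemma zB_mk[simp]: "zB (mk a b) = b" by (simp add: zB_def mk_def z_eq_iff)
lemma mk_zAB: "mk (zA w) (zB w) = w"
  by (cases w) (simp add: zA_def zB_def mk_def)
lemma ext_eq_iff: "w = w' \<longleftrightarrow> zA w = zA w' \<and> zB w = zB w'"
  by (metis mk_zAB)

lemma zA_add[simp]: "zA (u + v) = zA u + zA v" by (simp add: zA_def z_eq_iff)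
lemma zB_add[simp]: "zB (u + v) = zB u + zB v" by (simp add: zB_def z_eq_iff)
lemma zA_diff[simp]: "zA (u - v) = zA u - zA v" by (simp add: zA_def z_eq_iff)
lemma zB_diff[simp]: "zB (u - v) = zB u - zB v" by (simp add: zB_def z_eq_iff)
lemma zA_scaleR[simp]: "zA (r *\<^sub>R u) = r *\<^sub>R zA u" by (simp add: zA_def z_eq_iff)
lemma zB_scaleR[simp]: "zB (r *\<^sub>R u) = r *\<^sub>R zB u" by (simp add: zB_def z_eq_iff)
lemma zA_zero[simp]: "zA 0 = 0" by (simp add: zA_def z_eq_iff)
lemma zB_zero[simp]: "zB 0 = 0" by (simp add: zB_def z_eq_iff)

lemma addE_eq: "addE u v = u + v"
  by (cases u; cases v) (simp add: addE_def)

lemma XH_qp: "qpart (XH H z) = D2H H z" "ppart (XH H z) = - D1H H z"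
  by (simp_all add: XH_def)

lemma zA_flowA[simp]: "zA (flowA H t w) = zA w"
  by (cases w) (simp add: flowA_def zA_def)
lemma zB_flowA[simp]: "zB (flowA H t w) = zB w + t *\<^sub>R XH H (zA w)"
  by (cases w) (simp add: flowA_def zA_def zB_def z_eq_iff XH_qp)
lemma zA_flowB[simp]: "zA (flowB H t w) = zA w + t *\<^sub>R XH H (zB w)"
  by (cases w) (simp add: flowB_def zA_def zB_def z_eq_iff XH_qp)
lemma zB_flowB[simp]: "zB (flowB H t w) = zB w"
  by (cases w) (simp add: flowB_def zB_def)

definition sig :: "real^('d::finite+'d) \<Rightarrow> real^('d+'d)" where
  "sig \<mu> = mkz (- qpart \<mu>) (ppart \<mu>)"

lemma zA_DT[simp]: "zA (DT \<mu>) = sig \<mu>" by (simp add: DT_def zA_def sig_def)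
lemma zB_DT[simp]: "zB (DT \<mu>) = - sig \<mu>" by (simp add: DT_def zB_def sig_def z_eq_iff)
lemma zA_embed[simp]: "zA (embed z) = z" by (simp add: embed_def zA_def z_eq_iff)
lemma zB_embed[simp]: "zB (embed z) = z" by (simp add: embed_def zB_def z_eq_iff)
lemma inN_iff: "inN w \<longleftrightarrow> zA w = zB w"
  by (cases w) (auto simp: inN_def zA_def zB_def z_eq_iff)
lemma projE_inN: "inN w \<Longrightarrow> projE w = zA w"
  by (cases w) (auto simp: inN_def zA_def projE_def)

definition stepf :: "(real^('d::finite+'d) \<Rightarrow> real) \<Rightarrow> real \<Rightarrow> nat \<times> real \<Rightarrow> 'd ext \<Rightarrow> 'd ext" where
  "stepf H h = (\<lambda>(i,c) u. if even i then flowA H (c * h) u else flowB H (c * h) u)"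

lemma psi_fold: "psi H as h w = fold (stepf H h) (zip [0..<length as] as) w"
  by (simp add: psi_def stepf_def)

lemma fold_inv:
  assumes "\<And>x u. P u \<Longrightarrow> P (f x u)"
  shows "P w \<Longrightarrow> P (fold f xs w)"
  by (induction xs arbitrary: w) (auto intro: assms)

lemma fold_rel:
  assumes "\<And>x u u'. R u u' \<Longrightarrow> R (f x u) (f x u')"
  shows "R w w' \<Longrightarrow> R (fold f xs w) (fold f xs w')"
  by (induction xs arbitrary: w w') (auto intro: assms)

lemma step_res_zA: "zA (step_res H as h z \<mu>) = zA (psi H as h (embed z + DT \<mu>)) + sig \<mu>"
  by (simp add: step_res_def addE_eq)
lemma step_res_zB: "zB (step_res H as h z \<mu>) = zB (psi H as h (embed z + DT \<mu>)) - sig \<mu>"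
  by (simp add: step_res_def addE_eq)

lemma is_step_iff: "is_step H as h z0 z1 \<longleftrightarrow>
   (\<exists>\<mu>. zA (psi H as h (embed z0 + DT \<mu>)) = z1 - sig \<mu> \<and> zB (psi H as h (embed z0 + DT \<mu>)) = z1 + sig \<mu>)"
  unfolding is_step_def ext_eq_iff step_res_zA step_res_zB
  by (auto simp: algebra_simps)

definition SC :: "real^'n^'n \<Rightarrow> real^'n \<Rightarrow> real^'n \<Rightarrow> real" where
  "SC C u v = u \<bullet> (C *v v) + v \<bullet> (C *v u)"

lemma SC_sym: "SC C u v = SC C v u" by (simp add: SC_def)
lemma SC_add_right: "SC C a (b + c) = SC C a b + SC C a c"
  by (simp add: SC_def matrix_vector_right_distrib inner_add_left inner_add_right)
lemma SC_scale_right: "SC C a (t *\<^sub>R b) = t * SC C a b"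
  by (simp add: SC_def matrix_vector_mult_scaleR algebra_simps)

lemma quad_deriv:
  "((\<lambda>z. z \<bullet> (C *v z)) has_derivative (\<lambda>v. SC C z v)) (at z)"
proof -
  have "((\<lambda>z. z \<bullet> (C *v z)) has_derivative (\<lambda>v. z \<bullet> (C *v v) + v \<bullet> (C *v z))) (at z)"
    by (rule has_derivative_inner[OF has_derivative_ident bounded_linear.has_derivative[OF matrix_vector_mul_bounded_linear has_derivative_ident]])
  then show ?thesis by (simp add: SC_def)
qed

lemma FI_SC:
  assumes "first_integral H (\<lambda>z. z \<bullet> (C *v z))"
  shows "SC C z (XH H z) = 0"
proof -
  obtain Q' where Q': "((\<lambda>z. z \<bullet> (C *v z)) has_derivative Q') (at z)" "Q' (XH H z) = 0"
    using assms unfolding first_integral_def by blast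
  have "Q' = (\<lambda>v. SC C z v)" using has_derivative_unique[OF Q'(1) quad_deriv] .
  then show ?thesis using Q'(2) by simp
qed

lemma part1_i:
  assumes FI: "first_integral H (\<lambda>z. z \<bullet> (C *v z))" and st: "is_step H as h z0 z1"
  shows "z1 \<bullet> (C *v z1) = z0 \<bullet> (C *v z0)"
proof -
  obtain \<mu> where mu: "zA (psi H as h (embed z0 + DT \<mu>)) = z1 - sig \<mu>"
      "zB (psi H as h (embed z0 + DT \<mu>)) = z1 + sig \<mu>"
    using st unfolding is_step_iff by blast
  define I where "I w = SC C (zA w) (zB w)" for w
  have inv: "I (stepf H h x u) = I u" for x u
  proof -
    obtain i c where x: "x = (i, c)" by (cases x)
    show ?thesis
    proof (cases "even i")
      case True
      then show ?thesis using FI_SC[OF FI, of "zA u"]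
        by (simp add: I_def stepf_def x SC_add_right SC_scale_right)
    next
      case False
      have "SC C (zA u + (c * h) *\<^sub>R XH H (zB u)) (zB u) = SC C (zA u) (zB u)"
        using FI_SC[OF FI, of "zB u"] by (simp add: SC_sym[of C _ "zB u"] SC_add_right SC_scale_right)
      then show ?thesis using False by (simp add: I_def stepf_def x)
    qed
  qed
  have "I (psi H as h (embed z0 + DT \<mu>)) = I (embed z0 + DT \<mu>)"
    unfolding psi_fold
    by (rule fold_inv[where P = "\<lambda>w. I w = I (embed z0 + DT \<mu>)"]) (simp_all add: inv)
  then have "SC C (z1 - sig \<mu>) (z1 + sig \<mu>) = SC C (z0 + sig \<mu>) (z0 - sig \<mu>)"
    using mu by (simp add: I_def)
  then show ?thesis
    by (simp add: SC_def matrix_vector_right_distrib matrix_vector_mult_diff_distrib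
        inner_add_left inner_add_right inner_diff_left inner_diff_right inner_commute)
qed

lemma part1_iii:
  assumes sym: "\<forall>z. XH H (A *v z + b) = A *v XH H z" and st: "is_step H as h z0 z1"
  shows "is_step H as h (A *v z0 + b) (A *v z1 + b)"
proof -
  define aff where "aff z = A *v z + b" for z
  obtain \<mu> where mu: "zA (psi H as h (embed z0 + DT \<mu>)) = z1 - sig \<mu>"
      "zB (psi H as h (embed z0 + DT \<mu>)) = z1 + sig \<mu>"
    using st unfolding is_step_iff by blast
  define \<mu>' where "\<mu>' = mkz (- qpart (A *v sig \<mu>)) (ppart (A *v sig \<mu>))"
  have sig': "sig \<mu>' = A *v sig \<mu>" by (simp add: sig_def \<mu>'_def z_eq_iff)
  define R where "R u u' \<longleftrightarrow> zA u' = aff (zA u) \<and> zB u' = aff (zB u)" for u u' :: "'a ext"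
  have aff_add: "aff (x + t *\<^sub>R y) = aff x + t *\<^sub>R (A *v y)" for x y t
    by (simp add: aff_def matrix_vector_right_distrib matrix_vector_mult_scaleR)
  have Rstep: "R (stepf H h x u) (stepf H h x u')" if "R u u'" for x u u'
  proof -
    obtain i c where x: "x = (i, c)" by (cases x)
    show ?thesis using that sym by (auto simp: R_def stepf_def x aff_add aff_def[symmetric])
  qed
  have R0: "R (embed z0 + DT \<mu>) (embed (aff z0) + DT \<mu>')"
    by (simp add: R_def sig' aff_def algebra_simps)
  have "R (psi H as h (embed z0 + DT \<mu>)) (psi H as h (embed (aff z0) + DT \<mu>'))"
    unfolding psi_fold by (rule fold_rel[where R = R, OF Rstep R0])
  then have "zA (psi H as h (embed (aff z0) + DT \<mu>')) = aff (z1 - sig \<mu>)"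
       "zB (psi H as h (embed (aff z0) + DT \<mu>')) = aff (z1 + sig \<mu>)"
    unfolding R_def mu[symmetric] by simp_all
  moreover have "aff (z1 - sig \<mu>) = aff z1 - sig \<mu>'" "aff (z1 + sig \<mu>) = aff z1 + sig \<mu>'"
    by (simp_all add: aff_def sig' matrix_vector_mult_diff_distrib matrix_vector_right_distrib)
  ultimately have "zA (psi H as h (embed (aff z0) + DT \<mu>')) = aff z1 - sig \<mu>'"
       "zB (psi H as h (embed (aff z0) + DT \<mu>')) = aff z1 + sig \<mu>'" by simp_all
  then show ?thesis unfolding is_step_iff aff_def by blast
qed

lemma has_derivative_vec_lambda:
  fixes f :: "'a::real_normed_vector \<Rightarrow> 'n::finite \<Rightarrow> real"
  assumes "\<And>k. ((\<lambda>x. f x k) has_derivative (\<lambda>v. f' v k)) (at z)"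
  shows "((\<lambda>x. \<chi> k. f x k) has_derivative (\<lambda>v. \<chi> k. f' v k)) (at z)"
proof -
  have "\<forall>i\<in>Basis. ((\<lambda>x. (\<chi> k. f x k) \<bullet> i) has_derivative (\<lambda>v. (\<chi> k. f' v k) \<bullet> i)) (at z within UNIV)"
  proof
    fix i :: "real^'n" assume "i \<in> Basis"
    then obtain k where i: "i = axis k 1" by (auto simp: Basis_vec_def)
    show "((\<lambda>x. (\<chi> k. f x k) \<bullet> i) has_derivative (\<lambda>v. (\<chi> k. f' v k) \<bullet> i)) (at z within UNIV)"
      using assms[of k] by (simp add: i inner_axis)
  qed
  then show ?thesis by (rule iffD2[OF has_derivative_componentwise_within])
qed

definition Jop :: "real^('d::finite+'d) \<Rightarrow> real^('d+'d)" where
  "Jop v = mkz (ppart v) (- qpart v)"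

lemma omega_Jop: "omega u v = u \<bullet> Jop v"
  by (simp add: omega_def Jop_def inner_qp)
lemma Jop_inner: "Jop x \<bullet> Jop y = x \<bullet> y"
  by (simp add: Jop_def inner_qp add.commute)
lemma Jop_Jop: "Jop (Jop y) = - y"
  by (simp add: Jop_def z_eq_iff)
lemma Jop_add: "Jop (x + y) = Jop x + Jop y" by (simp add: Jop_def z_eq_iff)
lemma Jop_scaleR: "Jop (r *\<^sub>R x) = r *\<^sub>R Jop x" by (simp add: Jop_def z_eq_iff)
lemma Jop_bl: "bounded_linear Jop"
proof -
  have "linear Jop" by (rule linearI) (simp_all add: Jop_add Jop_scaleR)
  then show ?thesis using linear_conv_bounded_linear by auto
qed

lemma mkz_axis: "mkz (axis i 1) 0 = axis (Inl i) (1::real)" "mkz 0 (axis i 1) = axis (Inr i) (1::real)"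
  by (auto simp: mkz_def axis_def vec_eq_iff split: sum.split)

lemma smooth_facts:
  assumes "smooth_fun H"
  shows "\<exists>DX. \<forall>z. (XH H has_derivative DX z) (at z) \<and> (\<forall>a b. omega (DX z a) b + omega a (DX z b) = 0)"
proof -
  obtain Df :: "real^('a+'a) \<Rightarrow> (real^('a+'a)) list \<Rightarrow> real" where
    Df0: "\<And>y. Df y [] = H y" and
    Dfd: "\<And>y vs. ((\<lambda>x. Df x vs) has_derivative (\<lambda>v. Df y (v # vs))) (at y)"
    using assms unfolding smooth_fun_def by blast
  have HD: "(H has_derivative (\<lambda>v. Df y [v])) (at y)" for y
    using Dfd[where y=y and vs="[]"] by (simp add: Df0)
  have sym: "Df z [u, v] = Df z [v, u]" for z u v
  proof (rule schwarz[where H = H and DA = "\<lambda>y u. Df y [u]" and DB = "\<lambda>y w u. Df y [w, u]"])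
    show "\<And>y. (H has_derivative (\<lambda>u. Df y [u])) (at y)" by (rule HD)
    show "\<And>y u. ((\<lambda>x. Df x [u]) has_derivative (\<lambda>w. Df y [w, u])) (at y)" by (rule Dfd)
    show "\<And>u v. continuous (at z) (\<lambda>x. Df x [u, v])" using Dfd by (rule has_derivative_continuous)
  qed
  have lin1: "linear (\<lambda>w. Df z [w, a])" for z a using has_derivative_linear[OF Dfd[where y=z and vs="[a]"]] .
  have fd: "frechet_derivative H (at z) = (\<lambda>v. Df z [v])" for z
    using frechet_derivative_at[OF HD] by simp
  define G where "G z a = (\<chi> k. Df z [a, axis k 1])" for z a
  have XH_eq: "XH H z = Jop (\<chi> k. Df z [axis k 1])" for z
    by (simp add: XH_def Jop_def D1H_def D2H_def fd mkz_axis z_eq_iff qpart_def ppart_def)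
  have XHeq: "XH H = (\<lambda>z. Jop (\<chi> k. Df z [axis k 1]))" using XH_eq by auto
  have dgrad: "((\<lambda>x. \<chi> k. Df x [axis k 1]) has_derivative G z) (at z)" for z
    unfolding G_def by (rule has_derivative_vec_lambda) (rule Dfd)
  have dX: "(XH H has_derivative (\<lambda>a. Jop (G z a))) (at z)" for z
    unfolding XHeq by (rule bounded_linear.has_derivative[OF Jop_bl dgrad])
  have key: "u \<bullet> G z a = Df z [u, a]" for z u a
  proof -
    have "u \<bullet> G z a = (\<Sum>k\<in>UNIV. u $ k * Df z [axis k 1, a])"
      by (simp add: G_def inner_vec_def sym)
    also have "\<dots> = Df z [(\<Sum>k\<in>UNIV. u $ k *\<^sub>R axis k 1), a]"
      by (simp add: linear_sum[OF lin1] linear_cmul[OF lin1])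
    also have "(\<Sum>k\<in>UNIV. u $ k *\<^sub>R axis k 1) = u"
      using basis_expansion[of u] by (simp add: scalar_mult_eq_scaleR)
    finally show ?thesis .
  qed
  show ?thesis
  proof (rule exI[of _ "\<lambda>z a. Jop (G z a)"], intro allI conjI)
    fix z a b
    show "(XH H has_derivative (\<lambda>a. Jop (G z a))) (at z)" by (rule dX)
    have "omega (Jop (G z a)) b + omega a (Jop (G z b)) = b \<bullet> G z a - a \<bullet> G z b"
      by (simp add: omega_Jop Jop_inner Jop_Jop inner_commute)
    also have "\<dots> = 0" by (simp add: key sym)
    finally show "omega (Jop (G z a)) b + omega a (Jop (G z b)) = 0" .
  qed
qed

lemma qpart_bl: "bounded_linear (qpart :: real^('d::finite+'d) \<Rightarrow> _)"
proof -
  have "linear (qpart :: real^('d::finite+'d) \<Rightarrow> _)" by (rule linearI) simp_all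
  then show ?thesis using linear_conv_bounded_linear by auto
qed
lemma ppart_bl: "bounded_linear (ppart :: real^('d::finite+'d) \<Rightarrow> _)"
proof -
  have "linear (ppart :: real^('d::finite+'d) \<Rightarrow> _)" by (rule linearI) simp_all
  then show ?thesis using linear_conv_bounded_linear by auto
qed
lemma zA_bl: "bounded_linear (zA :: 'd::finite ext \<Rightarrow> _)"
proof -
  have "linear (zA :: 'd::finite ext \<Rightarrow> _)" by (rule linearI) simp_all
  then show ?thesis using linear_conv_bounded_linear by auto
qed
lemma zB_bl: "bounded_linear (zB :: 'd::finite ext \<Rightarrow> _)"
proof -
  have "linear (zB :: 'd::finite ext \<Rightarrow> _)" by (rule linearI) simp_all
  then show ?thesis using linear_conv_bounded_linear by auto
qed

lemma embed_eq: "embed z = mk z z" by (simp add: ext_eq_iff)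
lemma DT_eq: "DT m = mk (sig m) (- sig m)" by (simp add: ext_eq_iff)

lemma has_derivative_mk:
  assumes "(f has_derivative f') (at x)" "(g has_derivative g') (at x)"
  shows "((\<lambda>w. mk (f w) (g w)) has_derivative (\<lambda>d. mk (f' d) (g' d))) (at x)"
  unfolding mk_def
  by (intro has_derivative_Pair bounded_linear.has_derivative[OF qpart_bl] bounded_linear.has_derivative[OF ppart_bl] assms)

lemma sig_bl: "bounded_linear (sig :: real^('d::finite+'d) \<Rightarrow> _)"
proof -
  have "linear (sig :: real^('d::finite+'d) \<Rightarrow> _)" by (rule linearI) (simp_all add: sig_def z_eq_iff)
  then show ?thesis using linear_conv_bounded_linear by auto
qed

definition Om :: "'d::finite ext \<Rightarrow> 'd ext \<Rightarrow> real" where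
  "Om d d' = omega (zA d) (zB d') + omega (zB d) (zA d')"

definition sympl :: "('d::finite ext \<Rightarrow> 'd ext) \<Rightarrow> bool" where
  "sympl L \<longleftrightarrow> (\<forall>d d'. Om (L d) (L d') = Om d d')"

lemma omega_add_left: "omega (a + b) c = omega a c + omega b c"
  by (simp add: omega_def inner_add_left)
lemma omega_add_right: "omega a (b + c) = omega a b + omega a c"
  by (simp add: omega_def inner_add_right)
lemma omega_scale_left: "omega (r *\<^sub>R a) c = r * omega a c"
  by (simp add: omega_def algebra_simps)
lemma omega_scale_right: "omega a (r *\<^sub>R c) = r * omega a c"
  by (simp add: omega_def algebra_simps)

lemma omega_pm: "omega (x - s) (y + s') + omega (x + s) (y - s') = 2 * omega x y - 2 * omega s s'"
  by (simp add: omega_def inner_add_left inner_add_right inner_diff_left inner_diff_right algebra_simps)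
lemma omega_pm': "omega (x + s) (y - s') + omega (x - s) (y + s') = 2 * omega x y - 2 * omega s s'"
  using omega_pm[of x s y s'] by simp

lemma flow_sympl:
  assumes "smooth_fun H"
  shows "\<exists>L. (stepf H h x has_derivative L) (at w) \<and> sympl L"
proof -
  obtain DX where DX: "\<And>z. (XH H has_derivative DX z) (at z)"
    and ham: "\<And>z a b. omega (DX z a) b + omega a (DX z b) = 0"
    using smooth_facts[OF assms] by blast
  have dzA: "(zA has_derivative zA) (at w)" by (rule bounded_linear.has_derivative[OF zA_bl has_derivative_ident])
  have dzB: "(zB has_derivative zB) (at w)" by (rule bounded_linear.has_derivative[OF zB_bl has_derivative_ident])
  obtain i c where x: "x = (i, c)" by (cases x)
  show ?thesis
  proof (cases "even i")
    case True
    define t where "t = c * h"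
    have eq: "stepf H h x = (\<lambda>w. mk (zA w) (zB w + t *\<^sub>R XH H (zA w)))"
      by (rule ext) (simp add: stepf_def x True t_def ext_eq_iff)
    have d: "(stepf H h x has_derivative (\<lambda>d. mk (zA d) (zB d + t *\<^sub>R DX (zA w) (zA d)))) (at w)"
      unfolding eq
      by (intro has_derivative_mk dzA has_derivative_add dzB has_derivative_scaleR_right
          has_derivative_compose[OF dzA DX])
    have "sympl (\<lambda>d. mk (zA d) (zB d + t *\<^sub>R DX (zA w) (zA d)))"
      unfolding sympl_def
    proof (intro allI)
      fix d d' :: "'a ext"
      show "Om (mk (zA d) (zB d + t *\<^sub>R DX (zA w) (zA d))) (mk (zA d') (zB d' + t *\<^sub>R DX (zA w) (zA d'))) = Om d d'"
        using ham[of "zA w" "zA d" "zA d'"] unfolding Om_def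
        apply (simp add: omega_add_left omega_add_right omega_scale_left omega_scale_right algebra_simps)
        by (metis distrib_left mult_zero_right)
    qed
    then show ?thesis using d by blast
  next
    case False
    define t where "t = c * h"
    have eq: "stepf H h x = (\<lambda>w. mk (zA w + t *\<^sub>R XH H (zB w)) (zB w))"
      by (rule ext) (simp add: stepf_def x False t_def ext_eq_iff)
    have d: "(stepf H h x has_derivative (\<lambda>d. mk (zA d + t *\<^sub>R DX (zB w) (zB d)) (zB d))) (at w)"
      unfolding eq
      by (intro has_derivative_mk dzB has_derivative_add dzA has_derivative_scaleR_right
          has_derivative_compose[OF dzB DX])
    have "sympl (\<lambda>d. mk (zA d + t *\<^sub>R DX (zB w) (zB d)) (zB d))"
      unfolding sympl_def
    proof (intro allI)
      fix d d' :: "'a ext"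
      show "Om (mk (zA d + t *\<^sub>R DX (zB w) (zB d)) (zB d)) (mk (zA d' + t *\<^sub>R DX (zB w) (zB d')) (zB d')) = Om d d'"
        using ham[of "zB w" "zB d" "zB d'"] unfolding Om_def
        apply (simp add: omega_add_left omega_add_right omega_scale_left omega_scale_right algebra_simps)
        by (metis distrib_left mult_zero_right)
    qed
    then show ?thesis using d by blast
  qed
qed

lemma fold_sympl:
  assumes "\<And>x w. \<exists>L. (f x has_derivative L) (at w) \<and> sympl L"
  shows "\<exists>L. (fold f xs has_derivative L) (at w) \<and> sympl L"
proof (induction xs arbitrary: w)
  case Nil
  have "(fold f [] has_derivative id) (at w)" by (simp add: id_def has_derivative_ident)
  moreover have "sympl id" by (simp add: sympl_def)
  ultimately show ?case by blast
next
  case (Cons x xs)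
  obtain L1 where L1: "(f x has_derivative L1) (at w)" "sympl L1" using assms by blast
  obtain L2 where L2: "(fold f xs has_derivative L2) (at (f x w))" "sympl L2" using Cons by blast
  have "((\<lambda>w. fold f xs (f x w)) has_derivative (\<lambda>d. L2 (L1 d))) (at w)"
    by (rule has_derivative_compose[OF L1(1) L2(1)])
  moreover have "(\<lambda>w. fold f xs (f x w)) = fold f (x # xs)" by auto
  moreover have "sympl (\<lambda>d. L2 (L1 d))"
    unfolding sympl_def
  proof (intro allI)
    fix d d'
    have "Om (L2 (L1 d)) (L2 (L1 d')) = Om (L1 d) (L1 d')" using L2(2) unfolding sympl_def by blast
    also have "\<dots> = Om d d'" using L1(2) unfolding sympl_def by blast
    finally show "Om (L2 (L1 d)) (L2 (L1 d')) = Om d d'" .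
  qed
  ultimately show ?case by metis
qed

lemma part1_ii:
  assumes sm: "smooth_fun H" and U: "open U"
    and hyp: "\<forall>z\<in>U. \<mu> differentiable (at z) \<and> inN (step_res H as h z (\<mu> z))"
    and z: "z \<in> U"
  shows "\<exists>\<Phi>'. ((\<lambda>w. projE (step_res H as h w (\<mu> w))) has_derivative \<Phi>') (at z) \<and>
                         (\<forall>u v. omega (\<Phi>' u) (\<Phi>' v) = omega u v)"
proof -
  obtain m where m: "(\<mu> has_derivative m) (at z)" using hyp z unfolding differentiable_def by blast
  define W where "W x = mk x x + mk (sig (\<mu> x)) (- sig (\<mu> x))" for x
  have dsig: "((\<lambda>x. sig (\<mu> x)) has_derivative (\<lambda>d. sig (m d))) (at z)"
    by (rule bounded_linear.has_derivative[OF sig_bl m])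
  have dW: "(W has_derivative (\<lambda>d. mk d d + mk (sig (m d)) (- sig (m d)))) (at z)"
    unfolding W_def
    by (intro has_derivative_add has_derivative_mk has_derivative_ident dsig has_derivative_minus)
  have fs: "\<And>x w. \<exists>L. (stepf H h x has_derivative L) (at w) \<and> sympl L"
    using flow_sympl[OF sm] by blast
  obtain L where L: "(psi H as h has_derivative L) (at (W z))" "sympl L"
    using fold_sympl[where f="stepf H h" and xs="zip [0..<length as] as" and w="W z", OF fs]
    unfolding psi_fold[abs_def] by auto
  define R where "R x = psi H as h (W x) + mk (sig (\<mu> x)) (- sig (\<mu> x))" for x
  have Req: "step_res H as h x (\<mu> x) = R x" for x
    by (simp add: step_res_def addE_eq R_def W_def embed_eq DT_eq)
  define R' where "R' d = L (mk d d + mk (sig (m d)) (- sig (m d))) + mk (sig (m d)) (- sig (m d))" for d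
  have dR: "(R has_derivative R') (at z)"
    unfolding R_def R'_def
    by (intro has_derivative_add has_derivative_compose[OF dW L(1)] has_derivative_mk dsig has_derivative_minus)
  have dRA: "((\<lambda>x. zA (R x)) has_derivative (\<lambda>d. zA (R' d))) (at z)"
    by (rule bounded_linear.has_derivative[OF zA_bl dR])
  have dRB: "((\<lambda>x. zB (R x)) has_derivative (\<lambda>d. zB (R' d))) (at z)"
    by (rule bounded_linear.has_derivative[OF zB_bl dR])
  have eqAB: "zA (R x) = zB (R x)" if "x \<in> U" for x
    using hyp that by (simp add: Req[symmetric] inN_iff)
  have dRB': "((\<lambda>x. zB (R x)) has_derivative (\<lambda>d. zA (R' d))) (at z)"
    by (rule has_derivative_transform_within_open[OF dRA U z]) (simp add: eqAB)
  have AB': "(\<lambda>d. zA (R' d)) = (\<lambda>d. zB (R' d))"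
    using has_derivative_unique[OF dRB' dRB] .
  have dPhi: "((\<lambda>w. projE (step_res H as h w (\<mu> w))) has_derivative (\<lambda>d. zA (R' d))) (at z)"
    by (rule has_derivative_transform_within_open[OF dRA U z])
       (use hyp in \<open>simp add: Req[symmetric] projE_inN\<close>)
  have "omega (zA (R' u)) (zA (R' v)) = omega u v" for u v
  proof -
    define du where "du = mk u u + mk (sig (m u)) (- sig (m u))"
    define dv where "dv = mk v v + mk (sig (m v)) (- sig (m v))"
    have A1: "zA (L du) = zA (R' u) - sig (m u)" by (simp add: R'_def du_def)
    have B1: "zB (L du) = zA (R' u) + sig (m u)" using fun_cong[OF AB', of u] by (simp add: R'_def du_def)
    have A2: "zA (L dv) = zA (R' v) - sig (m v)" by (simp add: R'_def dv_def)
    have B2: "zB (L dv) = zA (R' v) + sig (m v)" using fun_cong[OF AB', of v] by (simp add: R'_def dv_def)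
    have "Om (L du) (L dv) = Om du dv" using L(2) unfolding sympl_def by blast
    then have "2 * omega (zA (R' u)) (zA (R' v)) - 2 * omega (sig (m u)) (sig (m v))
             = 2 * omega u v - 2 * omega (sig (m u)) (sig (m v))"
      unfolding Om_def A1 B1 A2 B2 omega_pm
      by (simp add: du_def dv_def omega_pm' diff_conv_add_uminus[symmetric])
    then show ?thesis by simp
  qed
  then show ?thesis using dPhi by blast
qed

theorem corollary1:
  fixes dummy :: "'d::finite itself"
  shows
  "(\<forall>(H :: real^('d+'d) \<Rightarrow> real) (as :: real list) (h :: real).
      smooth_fun H \<longrightarrow>
      ((\<forall>(C :: real^('d+'d)^('d+'d)) z0 z1.
          first_integral H (\<lambda>z. z \<bullet> (C *v z)) \<and> is_step H as h z0 z1 \<longrightarrow>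
          z1 \<bullet> (C *v z1) = z0 \<bullet> (C *v z0))
     \<and> (\<forall>(U :: (real^('d+'d)) set) (\<mu> :: real^('d+'d) \<Rightarrow> real^('d+'d)).
          open U \<and> (\<forall>z\<in>U. \<mu> differentiable (at z) \<and> inN (step_res H as h z (\<mu> z))) \<longrightarrow>
          (\<forall>z\<in>U. \<exists>\<Phi>'. ((\<lambda>w. projE (step_res H as h w (\<mu> w))) has_derivative \<Phi>') (at z) \<and>
                         (\<forall>u v. omega (\<Phi>' u) (\<Phi>' v) = omega u v)))
     \<and> (\<forall>(A :: real^('d+'d)^('d+'d)) (b :: real^('d+'d)).
          (\<forall>z. XH H (A *v z + b) = A *v XH H z) \<longrightarrow>
          (\<forall>z0 z1. is_step H as h z0 z1 \<longrightarrow> is_step H as h (A *v z0 + b) (A *v z1 + b)))))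
   \<and> (\<forall>p::nat. p \<ge> 1 \<longrightarrow>
       (\<exists>(s::nat) (A :: nat \<Rightarrow> nat \<Rightarrow> real) (b :: nat \<Rightarrow> real).
          rk_order_ge s A b p \<and>
          (\<exists>R N. rank_one s R \<and> spectral_radius_zero s N \<and>
                 (\<forall>i<s. \<forall>j<s. A i j = R i j + N i j)) \<and>
          (\<forall>i<s. \<forall>j<s. b i * b j - b i * A i j - b j * A j i = 0)))"
apply (rule conjI)
   apply (intro allI impI)
   apply (intro conjI)
     apply (blast intro: part1_i)
    apply (blast intro: part1_ii)
   apply (blast intro: part1_iii)
  apply (intro allI impI)
  apply (erule part2)
  done

end
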